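(* Let $\bm{Z}\in\{0,1\}^n$ (both groups nonempty), $\bm{X}\in\mathbb{R}^{n\times p}$ with first column all ones and rows $\bm{X}_i$, and $\bm{U}=(U_1,\ldots,U_n)^T\in\mathbb{R}^n$ not constant, with $\bar U=\frac1n\sum_iU_i$. Suppose that Assumptions (A1)–(A3) below hold and that the outcomes follow the linear model $Y_i=\bm{\beta}^T\bm{X}_i+\tau Z_i+\gamma U_i+\epsilon_i$, where the $\epsilon_i$ are i.i.d. with $\mathbb{E}(\epsilon_i)=0$, $\mathrm{Var}(\epsilon_i)=\sigma^2>0$, and $\epsilon_i\perp(\bm{X},\bm{Z},\bm{U})$ for all $i$. Let $\rho^2\ge0$, let $\bm{S}$ be an $n\times n$ symmetric positive semidefinite matrix with orthonormal eigenvectors $\bm{v}_1,\ldots,\bm{v}_n$ and eigenvalues $\lambda_1\ge\cdots\ge\lambda_n\ge0$, $\lambda_1>0$, and let $\bm{\Sigma}=\sigma^2\bm{I}_n+\rho^2\bm{S}$. Let $\hat\tau_{GLS}=\sum_{Z_i=1}w_iY_i-\sum_{Z_i=0}w_iY_i$ be the GLS estimator of $\tau$ with weights $$\bm{w}=\bm{M}\,\frac{(\bm{I}_n-\bm{\Sigma}^{-1}\bm{X}(\bm{X}^T\bm{\Sigma}^{-1}\bm{X})^{-1}\bm{X}^T)\bm{\Sigma}^{-1}\bm{Z}}{\bm{Z}^T\bm{\Sigma}^{-1}(\bm{I}_n-\bm{X}(\bm{X}^T\bm{\Sigma}^{-1}\bm{X})^{-1}\bm{X}^T\bm{\Sigma}^{-1})\bm{Z}}$$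 ($\bm{M}$ diagonal, $M_{ii}=2Z_i-1$; the required inverses assumed to exist and the denominator nonzero). Then, with $\tau_{ATT}=\tau$, $$\Big|\mathbb{E}(\hat\tau_{GLS}\mid\bm{X},\bm{Z},\bm{U})-\tau\Big|=\Big|\gamma\Big(\sum_{i:Z_i=1}w_iU_i-\sum_{i:Z_i=0}w_iU_i\Big)\Big|\le|\gamma|\sqrt{\frac{c_0(2\sigma^2+\rho^2\lambda_1+\rho^2\lambda_n)^2}{4(\sigma^2+\rho^2\lambda_1)(\sigma^2+\rho^2\lambda_n)(\sigma^2+\rho^2\lambda_1\mathcal{I}(\bm{U};\bm{S}))}\sum_{i=1}^n(U_i-\bar U)^2},$$ where $c_0=\sigma^2\sum_{i=1}^nw_i^2+\rho^2\sum_{k=1}^n\lambda_k\big(\sum_{i:Z_i=1}w_iv_{ki}-\sum_{i:Z_i=0}w_iv_{ki}\big)^2$.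
   Context: Potential outcomes $Y_i(1),Y_i(0)$; $\tau_{ATT}=\mathbb{E}[Y_i(1)-Y_i(0)\mid Z_i=1]$. Assumptions: (A1) consistency/no interference: $Y_i=Y_i(z)$ when $Z_i=z$; (A2) positivity: $0<\mathbb{P}(Z_i=1\mid X_i,U_i)<1$; (A3) conditional ignorability: $\{Y_i(1),Y_i(0)\}\perp Z_i\mid X_i,U_i$. The (normalized) Moran's I statistic of $\bm{U}$ relative to $\bm{S}$ is $\mathcal{I}(\bm{U};\bm{S})=\frac{\sum_{i=1}^n\sum_{j=1}^nS_{ij}(U_i-\bar U)(U_j-\bar U)}{\lambda_1\sum_{i=1}^n(U_i-\bar U)^2}$. Here $v_{ki}$ is the $i$-th entry of $\bm{v}_k$. *)

theory Defs
  imports "HOL-Probability.Probability"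
begin

definition Sigma_mat :: "real \<Rightarrow> real \<Rightarrow> real^'n^'n \<Rightarrow> real^'n^'n" where
  "Sigma_mat sigma2 rho2 S = sigma2 *\<^sub>R mat 1 + rho2 *\<^sub>R S"

definition gls_weights :: "real \<Rightarrow> real \<Rightarrow> real^'n^'n \<Rightarrow> real^'p^'n \<Rightarrow> real^'n \<Rightarrow> real^'n" where
  "gls_weights sigma2 rho2 S X Z =
     (let Si = matrix_inv (Sigma_mat sigma2 rho2 S);
          A = matrix_inv (transpose X ** Si ** X);
          num = (mat 1 - Si ** X ** A ** transpose X) *v (Si *v Z);
          den = Z \<bullet> (Si *v ((mat 1 - X ** A ** transpose X ** Si) *v Z))
      in (\<chi> i. (2 * Z$i - 1) * (num$i / den)))"

definition wdiff :: "real^'n \<Rightarrow> real^'n \<Rightarrow> ('n \<Rightarrow> real) \<Rightarrow> real" where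
  "wdiff Z w a = (\<Sum>i\<in>{i. Z$i = 1}. w$i * a i) - (\<Sum>i\<in>{i. Z$i = 0}. w$i * a i)"

definition mean_vec :: "real^'n \<Rightarrow> real" where
  "mean_vec U = (\<Sum>i\<in>UNIV. U$i) / real CARD('n)"

text \<open>Normalized Moran's I of U relative to S, lam1 = largest eigenvalue of S.\<close>
definition moran_I :: "real^'n \<Rightarrow> real^'n^'n \<Rightarrow> real \<Rightarrow> real" where
  "moran_I U S lam1 =
     (\<Sum>i\<in>UNIV. \<Sum>j\<in>UNIV. S$i$j * (U$i - mean_vec U) * (U$j - mean_vec U))
     / (lam1 * (\<Sum>i\<in>UNIV. (U$i - mean_vec U)^2))"

end

theory Submission
  imports Defs
begin

lemma expand:
  fixes v :: "nat \<Rightarrow> real^'n::finite"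
  assumes orth: "\<forall>k\<in>{1..CARD('n)}. \<forall>l\<in>{1..CARD('n)}. v k \<bullet> v l = (if k = l then 1 else 0)"
  shows "x = (\<Sum>k=1..CARD('n). (v k \<bullet> x) *\<^sub>R v k)"
proof -
  let ?n = "CARD('n)"
  let ?B = "v ` {1..?n}"
  have inj: "inj_on v {1..?n}"
    by (rule inj_onI) (metis orth one_neq_zero)
  have cardB: "card ?B = ?n" using inj by (simp add: card_image)
  have "0 \<notin> ?B"
  proof
    assume "0 \<in> ?B"
    then obtain k where "k \<in> {1..?n}" "v k = 0" by auto
    then show False using orth by (metis inner_zero_left zero_neq_one)
  qed
  moreover have "pairwise orthogonal ?B"
    using orth unfolding pairwise_def orthogonal_def by auto
  ultimately have ind: "independent ?B" by (rule pairwise_orthogonal_independent[rotated])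
  have "UNIV \<subseteq> span ?B"
    by (rule card_ge_dim_independent[OF _ ind]) (use cardB in simp_all)
  let ?y = "x - (\<Sum>k=1..?n. (v k \<bullet> x) *\<^sub>R v k)"
  have yo: "?y \<bullet> v l = 0" if "l \<in> {1..?n}" for l
  proof -
    have "(\<Sum>k=1..?n. (v k \<bullet> x) *\<^sub>R v k) \<bullet> v l = (\<Sum>k=1..?n. (v k \<bullet> x) * (v k \<bullet> v l))"
      by (simp add: inner_sum_left)
    also have "\<dots> = (\<Sum>k=1..?n. if k = l then v l \<bullet> x else 0)"
      by (rule sum.cong) (use orth that in auto)
    also have "\<dots> = v l \<bullet> x" using that by simp
    finally show ?thesis by (simp add: inner_diff_left inner_diff_right inner_commute)
  qed
  have "orthogonal ?y ?y"
    by (rule orthogonal_to_span) (use \<open>UNIV \<subseteq> span ?B\<close> yo in \<open>auto simp: orthogonal_def\<close>)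
  then show ?thesis by (simp add: orthogonal_def)
qed
lemma inv_right: "invertible (A::real^'n::finite^'m::finite) \<Longrightarrow> A ** matrix_inv A = mat 1"
  unfolding invertible_def matrix_inv_def by (rule conjunct1[OF someI_ex]) 

lemma gls_orth:
  fixes Si :: "real^'n::finite^'n" and X :: "real^'p::finite^'n"
  assumes inv: "invertible (transpose X ** Si ** X)"
  shows "transpose X *v ((mat 1 - Si ** X ** matrix_inv (transpose X ** Si ** X) ** transpose X) *v y) = 0"
proof -
  let ?A = "matrix_inv (transpose X ** Si ** X)"
  have 1: "(transpose X ** Si ** X) ** ?A = mat 1" by (rule inv_right[OF inv])
  have "transpose X *v (Si *v (X *v (?A *v (transpose X *v y)))) = ((transpose X ** Si ** X) ** ?A) *v (transpose X *v y)"
    by (simp only: matrix_vector_mul_assoc matrix_mul_assoc)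
  also have "\<dots> = transpose X *v y" by (simp add: 1)
  finally have 2: "transpose X *v (Si *v (X *v (?A *v (transpose X *v y)))) = transpose X *v y" .
  show ?thesis
    by (simp only: matrix_vector_mult_diff_rdistrib matrix_vector_mult_diff_distrib matrix_vector_mul_assoc[symmetric] matrix_vector_mul_lid 2) simp
qed

lemma gls_den:
  fixes Si :: "real^'n::finite^'n" and X :: "real^'p::finite^'n"
  shows "Z \<bullet> ((mat 1 - Si ** X ** A ** transpose X) *v (Si *v Z))
       = Z \<bullet> (Si *v ((mat 1 - X ** A ** transpose X ** Si) *v Z))"
  by (simp only: matrix_vector_mult_diff_rdistrib matrix_vector_mult_diff_distrib matrix_vector_mul_assoc[symmetric] matrix_vector_mul_lid)

lemma dot_tr: fixes X :: "real^'p::finite^'n::finite"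
  shows "x \<bullet> (X *v b) = (transpose X *v x) \<bullet> b"
  by (metis dot_lmul_matrix transpose_matrix_vector)
lemma kant_scalar:
  fixes p q mu :: "nat \<Rightarrow> real" and K :: "nat set"
  assumes fin: "finite K" and a: "a > 0" and mu: "\<And>k. k \<in> K \<Longrightarrow> a \<le> mu k \<and> mu k \<le> b"
    and SS: "SS = (\<Sum>k\<in>K. (q k)^2)" and SSpos: "SS > 0" and T: "T = (\<Sum>k\<in>K. mu k * (q k)^2)"
    and c0: "c0 = (\<Sum>k\<in>K. mu k * (p k)^2)"
  shows "(\<Sum>k\<in>K. p k * q k)^2 \<le> c0 * (a + b)^2 / (4 * b * a * (T / SS)) * SS"
proof -
  have mupos: "k \<in> K \<Longrightarrow> mu k > 0" for k using mu[of k] a by linarith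
  have b: "b > 0" using SSpos SS mu a by (metis all_not_in_conv order_less_le_trans order_trans sum.empty less_irrefl)
  define R where "R = (\<Sum>k\<in>K. (q k)^2 / mu k)"
  have Tpos: "T > 0"
  proof -
    have "a * SS \<le> T" unfolding SS T sum_distrib_left
      by (rule sum_mono) (use mu in \<open>auto intro!: mult_right_mono\<close>)
    then show ?thesis using a SSpos by (smt (verit) mult_pos_pos)
  qed
  have cs: "(\<Sum>k\<in>K. p k * q k)^2 \<le> c0 * R"
  proof -
    have "(\<Sum>k\<in>K. p k * q k) = (\<Sum>k\<in>K. (sqrt (mu k) * p k) * (q k / sqrt (mu k)))"
      proof (rule sum.cong)
      fix k assume "k \<in> K"
      then have "sqrt (mu k) > 0" using mupos by simp
      then show "p k * q k = (sqrt (mu k) * p k) * (q k / sqrt (mu k))" by (simp add: field_simps)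
    qed simp
    also have "\<dots>^2 \<le> (\<Sum>k\<in>K. (sqrt (mu k) * p k)^2) * (\<Sum>k\<in>K. (q k / sqrt (mu k))^2)"
      by (rule Cauchy_Schwarz_ineq_sum)
    also have "(\<Sum>k\<in>K. (sqrt (mu k) * p k)^2) = c0"
      unfolding c0 by (rule sum.cong) (use mupos in \<open>auto simp: power_mult_distrib less_imp_le\<close>)
    also have "(\<Sum>k\<in>K. (q k / sqrt (mu k))^2) = R"
      unfolding R_def by (rule sum.cong) (use mupos in \<open>auto simp: power_divide less_imp_le\<close>)
    finally show ?thesis .
  qed
  have each: "mu k * (q k)^2 + a * b * ((q k)^2 / mu k) \<le> (a + b) * (q k)^2" if "k \<in> K" for k
  proof -
    have m: "mu k > 0" using mupos that .
    have "(mu k - a) * (mu k - b) \<le> 0" using mu[OF that] by (simp add: mult_nonneg_nonpos)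
    then have "mu k * mu k + a * b \<le> (a + b) * mu k" by (simp add: algebra_simps)
    then have "(mu k * mu k + a * b) * ((q k)^2 / mu k) \<le> (a + b) * mu k * ((q k)^2 / mu k)"
      by (rule mult_right_mono) (use m in simp)
    moreover have "(mu k * mu k + a * b) * ((q k)^2 / mu k) = mu k * (q k)^2 + a * b * ((q k)^2 / mu k)"
      using m by (simp add: field_simps power2_eq_square)
    moreover have "(a + b) * mu k * ((q k)^2 / mu k) = (a + b) * (q k)^2"
      using m by simp
    ultimately show ?thesis by simp
  qed
  have sumin: "T + a * b * R \<le> (a + b) * SS"
  proof -
    have "T + a * b * R = (\<Sum>k\<in>K. mu k * (q k)^2 + a * b * ((q k)^2 / mu k))"
      unfolding T R_def by (simp add: sum.distrib sum_distrib_left)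
    also have "\<dots> \<le> (\<Sum>k\<in>K. (a + b) * (q k)^2)" by (rule sum_mono) (rule each)
    also have "\<dots> = (a + b) * SS" unfolding SS by (simp add: sum_distrib_left)
    finally show ?thesis .
  qed
  have Rnn: "R \<ge> 0" unfolding R_def by (rule sum_nonneg) (use mupos in \<open>auto intro!: divide_nonneg_pos\<close>)
  have "4 * (a * b) * (R * T) \<le> (T + a * b * R)^2"
  proof -
    have "(T + a * b * R)^2 - 4 * (a * b) * (R * T) = (T - a * b * R)^2"
      by (simp add: power2_eq_square algebra_simps)
    then show ?thesis using zero_le_power2[of "T - a * b * R"] by linarith
  qed
  also have "\<dots> \<le> ((a + b) * SS)^2"
    using sumin Tpos Rnn a b by (intro power_mono) auto
  finally have k: "4 * (a * b) * (R * T) \<le> ((a + b) * SS)^2" .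
  have "R \<le> (a + b)^2 / (4 * b * a * (T / SS)) * SS"
  proof -
    have "(a + b)^2 / (4 * b * a * (T / SS)) * SS = ((a + b) * SS)^2 / (4 * (a * b) * T)"
      using SSpos by (simp add: field_simps power2_eq_square)
    moreover have "R \<le> ((a + b) * SS)^2 / (4 * (a * b) * T)"
    proof -
      have d: "4 * (a * b) * T > 0" using a b Tpos by simp
      have "R * (4 * (a * b) * T) \<le> ((a + b) * SS)^2" using k by (simp add: algebra_simps)
      then show ?thesis using d by (simp add: pos_le_divide_eq)
    qed
    ultimately show ?thesis by simp
  qed
  have c0nn: "c0 \<ge> 0" unfolding c0 by (rule sum_nonneg) (metis mupos less_imp_le mult_nonneg_nonneg zero_le_power2)
  have "c0 * R \<le> c0 * ((a + b)^2 / (4 * b * a * (T / SS)) * SS)"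
    by (rule mult_left_mono) fact+
  with cs show ?thesis by simp
qed
lemma wdiff_signed:
  fixes Z t :: "real^'n::finite"
  assumes Z01: "\<forall>i. Z$i = 0 \<or> Z$i = 1"
  shows "wdiff Z (\<chi> i. (2 * Z$i - 1) * t$i) a = (\<Sum>i\<in>UNIV. t$i * a i)"
proof -
  have U: "UNIV = {i. Z$i = 1} \<union> {i. Z$i = 0}" using Z01 by auto
  have D: "{i. Z$i = 1} \<inter> {i. Z$i = (0::real)} = {}" by auto
  have "(\<Sum>i\<in>UNIV. t$i * a i) = (\<Sum>i\<in>{i. Z$i = 1}. t$i * a i) + (\<Sum>i\<in>{i. Z$i = 0}. t$i * a i)"
    by (subst U, rule sum.union_disjoint) (use D in auto)
  moreover have "wdiff Z (\<chi> i. (2 * Z$i - 1) * t$i) a = (\<Sum>i\<in>{i. Z$i = 1}. t$i * a i) - (\<Sum>i\<in>{i. Z$i = 0}. - (t$i * a i))"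
    unfolding wdiff_def by (intro arg_cong2[where f="(-)"] sum.cong) auto
  ultimately show ?thesis by (simp add: sum_negf)
qed

lemma parseval:
  fixes v :: "nat \<Rightarrow> real^'n::finite"
  assumes orth: "\<forall>k\<in>{1..CARD('n)}. \<forall>l\<in>{1..CARD('n)}. v k \<bullet> v l = (if k = l then 1 else 0)"
  shows "x \<bullet> y = (\<Sum>k=1..CARD('n). (v k \<bullet> x) * (v k \<bullet> y))"
proof -
  have "x \<bullet> y = (\<Sum>k=1..CARD('n). (v k \<bullet> x) *\<^sub>R v k) \<bullet> y"
    using expand[OF orth, of x] by simp
  also have "\<dots> = (\<Sum>k=1..CARD('n). (v k \<bullet> x) * (v k \<bullet> y))"
    by (simp add: inner_sum_left)
  finally show ?thesis .
qed

lemma quadS: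
  fixes v :: "nat \<Rightarrow> real^'n::finite" and S :: "real^'n^'n"
  assumes orth: "\<forall>k\<in>{1..CARD('n)}. \<forall>l\<in>{1..CARD('n)}. v k \<bullet> v l = (if k = l then 1 else 0)"
    and eig: "\<forall>k\<in>{1..CARD('n)}. S *v v k = lam k *\<^sub>R v k"
  shows "x \<bullet> (S *v x) = (\<Sum>k=1..CARD('n). lam k * (v k \<bullet> x)^2)"
proof -
  have "S *v x = S *v (\<Sum>k=1..CARD('n). (v k \<bullet> x) *\<^sub>R v k)"
    using expand[OF orth, of x] by simp
  also have "\<dots> = (\<Sum>k=1..CARD('n). (v k \<bullet> x) *\<^sub>R (S *v v k))"
    by (simp add: linear_sum[OF matrix_vector_mul_linear] matrix_vector_mult_scaleR)
  also have "\<dots> = (\<Sum>k=1..CARD('n). (v k \<bullet> x) *\<^sub>R (lam k *\<^sub>R v k))"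
    by (rule sum.cong) (use eig in auto)
  finally have "x \<bullet> (S *v x) = x \<bullet> (\<Sum>k=1..CARD('n). (v k \<bullet> x) *\<^sub>R (lam k *\<^sub>R v k))" by simp
  also have "\<dots> = (\<Sum>k=1..CARD('n). lam k * (v k \<bullet> x)^2)"
    by (simp add: inner_sum_right power2_eq_square inner_commute mult_ac)
  finally show ?thesis .
qed

theorem proposition3:
  fixes M :: "'a measure"
    and eps :: "'n::finite \<Rightarrow> 'a \<Rightarrow> real"
    and X :: "real^'p::finite^'n" and j0 :: 'p
    and Z U :: "real^'n"
    and beta :: "real^'p" and tau gamma sigma2 rho2 :: real
    and S :: "real^'n^'n" and v :: "nat \<Rightarrow> real^'n" and lam :: "nat \<Rightarrow> real"
  assumes Z01: "\<forall>i. Z$i = 0 \<or> Z$i = 1"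
    and treated: "\<exists>i. Z$i = 1" and control: "\<exists>i. Z$i = 0"
    and intercept: "\<forall>i. X$i$j0 = 1"
    and U_nonconst: "\<exists>i j. U$i \<noteq> U$j"
    and P: "prob_space M"
    and eps_meas: "\<forall>i. eps i \<in> borel_measurable M"
    and eps_indep: "prob_space.indep_vars M (\<lambda>_. borel) eps UNIV"
    and eps_ident: "\<forall>i j. distr M borel (eps i) = distr M borel (eps j)"
    and eps_int: "\<forall>i. integrable M (eps i)"
    and eps_sq_int: "\<forall>i. integrable M (\<lambda>\<omega>. (eps i \<omega>)^2)"
    and eps_mean: "\<forall>i. integral\<^sup>L M (eps i) = 0"
    and eps_var: "\<forall>i. integral\<^sup>L M (\<lambda>\<omega>. (eps i \<omega> - integral\<^sup>L M (eps i))^2) = sigma2"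
    and sigma_pos: "sigma2 > 0"
    and rho_nonneg: "rho2 \<ge> 0"
    and S_sym: "transpose S = S"
    and S_psd: "\<forall>x. x \<bullet> (S *v x) \<ge> 0"
    and v_orthonormal: "\<forall>k\<in>{1..CARD('n)}. \<forall>l\<in>{1..CARD('n)}.
                          v k \<bullet> v l = (if k = l then 1 else 0)"
    and v_eigen: "\<forall>k\<in>{1..CARD('n)}. S *v v k = lam k *\<^sub>R v k"
    and lam_sorted: "\<forall>k\<in>{1..CARD('n)}. \<forall>l\<in>{1..CARD('n)}. k \<le> l \<longrightarrow> lam l \<le> lam k"
    and lam_nonneg: "lam (CARD('n)) \<ge> 0"
    and lam1_pos: "lam 1 > 0"
    and XSX_inv: "invertible (transpose X ** matrix_inv (Sigma_mat sigma2 rho2 S) ** X)"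
    and den_nz: "Z \<bullet> (matrix_inv (Sigma_mat sigma2 rho2 S) *v
                   ((mat 1 - X ** matrix_inv (transpose X ** matrix_inv (Sigma_mat sigma2 rho2 S) ** X)
                       ** transpose X ** matrix_inv (Sigma_mat sigma2 rho2 S)) *v Z)) \<noteq> 0"
  shows "let w = gls_weights sigma2 rho2 S X Z;
             Y = (\<lambda>i \<omega>. beta \<bullet> (X$i) + tau * Z$i + gamma * U$i + eps i \<omega>);
             tau_hat = (\<lambda>\<omega>. wdiff Z w (\<lambda>i. Y i \<omega>));
             n = CARD('n);
             lam1 = lam 1; lamn = lam n;
             c0 = sigma2 * (\<Sum>i\<in>UNIV. (w$i)^2)
                  + rho2 * (\<Sum>k=1..n. lam k * (wdiff Z w (\<lambda>i. v k $ i))^2)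
         in \<bar>integral\<^sup>L M tau_hat - tau\<bar> = \<bar>gamma * wdiff Z w (\<lambda>i. U$i)\<bar>
            \<and> \<bar>gamma * wdiff Z w (\<lambda>i. U$i)\<bar>
              \<le> \<bar>gamma\<bar> * sqrt (c0 * (2 * sigma2 + rho2 * lam1 + rho2 * lamn)^2
                   / (4 * (sigma2 + rho2 * lam1) * (sigma2 + rho2 * lamn)
                        * (sigma2 + rho2 * lam1 * moran_I U S lam1))
                   * (\<Sum>i\<in>UNIV. (U$i - mean_vec U)^2))"
proof -
  interpret prob_space M by (rule P)
  let ?n = "CARD('n)"
  define Si where "Si = matrix_inv (Sigma_mat sigma2 rho2 S)"
  define A where "A = matrix_inv (transpose X ** Si ** X)"
  define num where "num = (mat 1 - Si ** X ** A ** transpose X) *v (Si *v Z)"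
  define den where "den = Z \<bullet> (Si *v ((mat 1 - X ** A ** transpose X ** Si) *v Z))"
  define t where "t = (1 / den) *\<^sub>R num"
  define w where "w = gls_weights sigma2 rho2 S X Z"
  have w_eq: "w = (\<chi> i. (2 * Z$i - 1) * t$i)"
    unfolding w_def gls_weights_def Let_def t_def num_def den_def A_def Si_def by simp
  have den_nz': "den \<noteq> 0" using den_nz unfolding den_def A_def Si_def .
  have wd: "wdiff Z w a = t \<bullet> (\<chi> i. a i)" for a
    unfolding w_eq wdiff_signed[OF Z01] by (simp add: inner_vec_def)
  have tX: "t \<bullet> (X *v b) = 0" for b
  proof -
    have "transpose X *v num = 0" unfolding num_def A_def by (rule gls_orth[OF XSX_inv[folded Si_def]])
    then have "num \<bullet> (X *v b) = 0" by (simp only: dot_tr) simp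
    then show ?thesis unfolding t_def by simp
  qed
  have tZ: "t \<bullet> Z = 1"
  proof -
    have "num \<bullet> Z = den" unfolding num_def den_def using gls_den[of Z Si X A]
      by (simp add: inner_commute)
    then show ?thesis unfolding t_def using den_nz' by simp
  qed
  have one_eq: "(\<chi> i. (1::real)) = X *v axis j0 1"
    using intercept by (simp add: vec_eq_iff matrix_vector_mult_def axis_def if_distrib[of "\<lambda>x. _ * x"] sum.delta cong: if_cong)
  have t1: "t \<bullet> (\<chi> i. 1) = 0" using tX one_eq by simp
  have Xb: "(\<chi> i. beta \<bullet> (X$i)) = X *v beta"
    by (simp add: vec_eq_iff matrix_vector_mult_def inner_vec_def mult.commute)
  define wdU where "wdU = wdiff Z w (\<lambda>i. U$i)"
  have wdU_t: "wdU = t \<bullet> U" unfolding wdU_def wd by simp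
  define C where "C = tau + gamma * wdU"
  have th: "wdiff Z w (\<lambda>i. beta \<bullet> (X$i) + tau * Z$i + gamma * U$i + eps i \<omega>)
            = C + (\<Sum>i\<in>UNIV. t$i * eps i \<omega>)" for \<omega>
  proof -
    have "wdiff Z w (\<lambda>i. beta \<bullet> (X$i) + tau * Z$i + gamma * U$i + eps i \<omega>)
        = t \<bullet> (\<chi> i. beta \<bullet> (X$i)) + tau * (t \<bullet> Z) + gamma * (t \<bullet> U) + (\<Sum>i\<in>UNIV. t$i * eps i \<omega>)"
      unfolding wd by (simp add: inner_vec_def sum.distrib algebra_simps sum_distrib_left)
    also have "\<dots> = C + (\<Sum>i\<in>UNIV. t$i * eps i \<omega>)"
      unfolding Xb tX tZ C_def wdU_t by simp
    finally show ?thesis .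
  qed
  have intE: "integral\<^sup>L M (\<lambda>\<omega>. C + (\<Sum>i\<in>UNIV. t$i * eps i \<omega>)) = C"
  proof -
    have "integral\<^sup>L M (\<lambda>\<omega>. C + (\<Sum>i\<in>UNIV. t$i * eps i \<omega>))
        = integral\<^sup>L M (\<lambda>\<omega>. C) + integral\<^sup>L M (\<lambda>\<omega>. \<Sum>i\<in>UNIV. t$i * eps i \<omega>)"
      by (rule Bochner_Integration.integral_add) (use eps_int in auto)
    also have "integral\<^sup>L M (\<lambda>\<omega>. \<Sum>i\<in>UNIV. t$i * eps i \<omega>) = (\<Sum>i\<in>UNIV. t$i * integral\<^sup>L M (eps i))"
      by (subst Bochner_Integration.integral_sum) (use eps_int in auto)
    finally show ?thesis using eps_mean prob_space by simp
  qed
  have part1: "\<bar>integral\<^sup>L M (\<lambda>\<omega>. wdiff Z w (\<lambda>i. beta \<bullet> (X$i) + tau * Z$i + gamma * U$i + eps i \<omega>)) - tau\<bar>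
       = \<bar>gamma * wdU\<bar>"
    unfolding th intE unfolding C_def by simp
  define m where "m = mean_vec U"
  define Uc where "Uc = U - m *\<^sub>R (\<chi> i. 1)"
  have Uc_i: "Uc$i = U$i - m" for i unfolding Uc_def by simp
  have wdU_c: "wdU = t \<bullet> Uc" unfolding wdU_t Uc_def using t1 by (simp add: inner_diff_right)
  define SS where "SS = (\<Sum>i\<in>UNIV. (U$i - m)^2)"
  have SS_eq: "SS = Uc \<bullet> Uc" unfolding SS_def by (simp add: inner_vec_def Uc_i power2_eq_square)
  have Uc_nz: "Uc \<noteq> 0"
  proof
    assume "Uc = 0"
    then have "U$i = m" for i using Uc_i[of i] by simp
    then show False using U_nonconst by auto
  qed
  have SSpos: "SS > 0" unfolding SS_eq using Uc_nz by simp
  define p where "p k = v k \<bullet> t" for k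
  define q where "q k = v k \<bullet> Uc" for k
  define mu where "mu k = sigma2 + rho2 * lam k" for k
  define Q where "Q = (\<Sum>k=1..?n. lam k * (q k)^2)"
  have nge1: "?n \<ge> 1" by (simp add: Suc_leI)
  have lam_rng: "lam ?n \<le> lam k \<and> lam k \<le> lam 1" if "k \<in> {1..?n}" for k
    using lam_sorted that nge1 by auto
  have mu_rng: "mu ?n \<le> mu k \<and> mu k \<le> mu 1" if "k \<in> {1..?n}" for k
    using lam_rng[OF that] rho_nonneg unfolding mu_def by (auto intro: mult_left_mono add_left_mono)
  have apos: "mu ?n > 0" unfolding mu_def using sigma_pos rho_nonneg lam_nonneg by (simp add: add_pos_nonneg)
  have SSq: "SS = (\<Sum>k=1..?n. (q k)^2)" unfolding SS_eq q_def parseval[OF v_orthonormal, of Uc Uc]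
    by (simp add: power2_eq_square)
  have tt: "t \<bullet> t = (\<Sum>k=1..?n. (p k)^2)" unfolding p_def parseval[OF v_orthonormal, of t t]
    by (simp add: power2_eq_square)
  have tU: "t \<bullet> Uc = (\<Sum>k=1..?n. p k * q k)" unfolding p_def q_def by (rule parseval[OF v_orthonormal])
  have UQ: "Uc \<bullet> (S *v Uc) = Q" unfolding Q_def q_def by (rule quadS[OF v_orthonormal v_eigen])
  define T where "T = (\<Sum>k=1..?n. mu k * (q k)^2)"
  have T_eq: "T = sigma2 * SS + rho2 * Q"
    unfolding T_def SSq Q_def mu_def by (simp add: algebra_simps sum.distrib sum_distrib_left)
  define c0 where "c0 = sigma2 * (\<Sum>i\<in>UNIV. (w$i)^2) + rho2 * (\<Sum>k=1..?n. lam k * (wdiff Z w (\<lambda>i. v k $ i))^2)"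
  have ww: "(\<Sum>i\<in>UNIV. (w$i)^2) = t \<bullet> t"
  proof -
    have "(w$i)^2 = t$i * t$i" for i
    proof -
      have "(2 * Z$i - 1)^2 = (1::real)" using Z01 by (metis power2_minus mult_zero_right mult_1_right diff_0 power_one numeral_One one_add_one add_diff_cancel_right' zero_diff)
      then show ?thesis unfolding w_eq by (simp add: power_mult_distrib power2_eq_square)
    qed
    then show ?thesis by (simp add: inner_vec_def)
  qed
  have wv: "wdiff Z w (\<lambda>i. v k $ i) = p k" for k unfolding wd p_def by (simp add: inner_commute)
  have c0_eq: "c0 = (\<Sum>k=1..?n. mu k * (p k)^2)"
    unfolding c0_def ww wv tt mu_def by (simp add: algebra_simps sum.distrib sum_distrib_left)
  have key: "(\<Sum>k=1..?n. p k * q k)^2 \<le> c0 * (mu ?n + mu 1)^2 / (4 * mu 1 * mu ?n * (T / SS)) * SS"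
    by (rule kant_scalar[OF _ apos mu_rng SSq SSpos T_def c0_eq]) simp
  have moran: "moran_I U S (lam 1) = Q / (lam 1 * SS)"
  proof -
    have "(\<Sum>i\<in>UNIV. \<Sum>j\<in>UNIV. S$i$j * (U$i - mean_vec U) * (U$j - mean_vec U)) = Uc \<bullet> (S *v Uc)"
      by (simp add: inner_vec_def matrix_vector_mult_def Uc_i m_def sum_distrib_left mult_ac)
    then show ?thesis unfolding moran_I_def UQ SS_def m_def by simp
  qed
  have D: "sigma2 + rho2 * lam 1 * moran_I U S (lam 1) = T / SS"
    unfolding moran T_eq using lam1_pos SSpos by (simp add: field_simps)
  have key2: "wdU^2 \<le> c0 * (2 * sigma2 + rho2 * lam 1 + rho2 * lam ?n)^2
                   / (4 * (sigma2 + rho2 * lam 1) * (sigma2 + rho2 * lam ?n)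
                        * (sigma2 + rho2 * lam 1 * moran_I U S (lam 1)))
                   * (\<Sum>i\<in>UNIV. (U$i - mean_vec U)^2)"
  proof -
    have "2 * sigma2 + rho2 * lam 1 + rho2 * lam ?n = mu ?n + mu 1" unfolding mu_def by simp
    then show ?thesis using key unfolding D wdU_c tU SS_def[symmetric, unfolded m_def] mu_def
      by (simp add: m_def[symmetric] SS_def[symmetric] add_ac)
  qed
  have part2: "\<bar>gamma * wdU\<bar> \<le> \<bar>gamma\<bar> * sqrt (c0 * (2 * sigma2 + rho2 * lam 1 + rho2 * lam ?n)^2
                   / (4 * (sigma2 + rho2 * lam 1) * (sigma2 + rho2 * lam ?n)
                        * (sigma2 + rho2 * lam 1 * moran_I U S (lam 1)))
                   * (\<Sum>i\<in>UNIV. (U$i - mean_vec U)^2))"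
  proof -
    have "\<bar>wdU\<bar> \<le> sqrt (c0 * (2 * sigma2 + rho2 * lam 1 + rho2 * lam ?n)^2
                   / (4 * (sigma2 + rho2 * lam 1) * (sigma2 + rho2 * lam ?n)
                        * (sigma2 + rho2 * lam 1 * moran_I U S (lam 1)))
                   * (\<Sum>i\<in>UNIV. (U$i - mean_vec U)^2))"
      using real_sqrt_le_mono[OF key2] by simp
    then show ?thesis by (simp add: abs_mult mult_left_mono)
  qed
  show ?thesis
    unfolding Let_def w_def[symmetric] wdU_def[symmetric] c0_def[symmetric]
    using part1 part2 by simp
qed

end
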